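(* Let $B$ be a finite Blaschke product of degree $n=p_1p_2\cdots p_m$ (with integers $p_i\ge 2$) having exactly one critical value. Then for every permutation $\sigma$ of $\{1,\dots,m\}$ there exist finite Blaschke products $B_1,\dots,B_m$ with $\deg B_j=p_{\sigma(j)}$ such that $B=B_1\circ B_2\circ\cdots\circ B_m$.
   Context: A finite Blaschke product of degree $d$ is $B(z)=\gamma\prod_{j=1}^d \frac{z-a_j}{1-\overline{a_j}z}$ with $a_j\in\mathbb{D}$ and $|\gamma|=1$. The set of critical values of $B$ is $\{w\in\mathbb{D}: w=B(z)\text{ for some } z\in\mathbb{D} \text{ with } B'(z)=0\}$. *)

theory Defs
  imports "HOL-Analysis.Analysis" "HOL-Combinatorics.Permutations"
begin

definition blaschke :: "complex \<Rightarrow> complex list \<Rightarrow> complex \<Rightarrow> complex" where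
  "blaschke \<gamma> as z = \<gamma> * (\<Prod>a\<leftarrow>as. (z - a) / (1 - cnj a * z))"

definition is_blaschke :: "(complex \<Rightarrow> complex) \<Rightarrow> nat \<Rightarrow> bool" where
  "is_blaschke B d \<longleftrightarrow> (\<exists>\<gamma> as. norm \<gamma> = 1 \<and> length as = d \<and> set as \<subseteq> ball 0 1 \<and>
      (\<forall>z\<in>ball 0 1. B z = blaschke \<gamma> as z))"

definition critical_values :: "(complex \<Rightarrow> complex) \<Rightarrow> complex set" where
  "critical_values B = {w \<in> ball 0 1. \<exists>z\<in>ball 0 1. deriv B z = 0 \<and> w = B z}"

definition compose_list :: "(complex \<Rightarrow> complex) list \<Rightarrow> complex \<Rightarrow> complex" where
  "compose_list fs = foldr (\<circ>) fs id"

end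

theory Submission imports Defs "HOL-Computational_Algebra.Fundamental_Theorem_Algebra" begin

definition mob :: "complex \<Rightarrow> complex \<Rightarrow> complex" where
  "mob a z = (z - a) / (1 - cnj a * z)"

lemma blaschke_Nil [simp]: "blaschke g [] z = g"
  unfolding blaschke_def by simp

lemma blaschke_Cons: "blaschke g (a # as) z = mob a z * blaschke g as z"
  unfolding blaschke_def mob_def by (simp add: mult_ac)

lemma blaschke_Cons_fun: "blaschke g (a # as) = (\<lambda>z. mob a z * blaschke g as z)"
  using blaschke_Cons by blast

lemma norm_identity:
  "(norm (1 - cnj a * z))^2 - (norm (z - a))^2 = (1 - (norm a)^2) * (1 - (norm z)^2)"
proof -
  have "complex_of_real ((norm (1 - cnj a * z))^2 - (norm (z - a))^2)
      = complex_of_real ((1 - (norm a)^2) * (1 - (norm z)^2))"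
    by (simp only: of_real_diff of_real_mult of_real_1 complex_norm_square complex_cnj_diff
        complex_cnj_mult complex_cnj_cnj complex_cnj_one) (simp add: algebra_simps)
  then show ?thesis using of_real_eq_iff by blast
qed

lemma denom_nz: "norm a < 1 \<Longrightarrow> norm z \<le> 1 \<Longrightarrow> 1 - cnj a * z \<noteq> 0"
proof -
  assume as: "norm a < 1" "norm z \<le> 1"
  have "norm a * norm z \<le> norm a" by (rule mult_left_le) (use as in auto)
  then have "norm (cnj a * z) < 1" using as by (simp add: norm_mult)
  then show ?thesis by auto
qed

lemma sq_lt1: "norm (a::complex) < 1 \<Longrightarrow> (norm a)^2 < 1"
  using power_strict_mono[of "norm a" 1 2] by simp

lemma mob_norm_lt: assumes "norm a < 1" "norm z < 1" shows "norm (mob a z) < 1"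
proof -
  have "(1 - (norm a)^2) * (1 - (norm z)^2) > 0"
    using sq_lt1[OF assms(1)] sq_lt1[OF assms(2)] by (simp add: mult_pos_pos)
  then have "(norm (z - a))^2 < (norm (1 - cnj a * z))^2"
    using norm_identity[of a z] by linarith
  then have lt: "norm (z - a) < norm (1 - cnj a * z)"
    by (rule power2_less_imp_less) simp
  have "norm (1 - cnj a * z) > 0" using denom_nz[of a z] assms by simp
  then have "norm (z - a) / norm (1 - cnj a * z) < 1" using lt by simp
  then show ?thesis unfolding mob_def by (simp add: norm_divide)
qed

lemma mob_nz: assumes "norm a < 1" "norm z \<le> 1" "z \<noteq> a" shows "mob a z \<noteq> 0"
  using denom_nz[OF assms(1,2)] assms(3) unfolding mob_def by simp

lemma blaschke_norm_le:
  assumes "norm g = 1" "set as \<subseteq> ball 0 1" "norm z < 1"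
  shows "norm (blaschke g as z) \<le> 1"
  using assms(2)
proof (induction as)
  case Nil then show ?case using assms by simp
next
  case (Cons a as)
  then have "norm a < 1" by simp
  then have "norm (mob a z) < 1" using mob_norm_lt assms(3) by blast
  moreover have "norm (blaschke g as z) \<le> 1" using Cons by simp
  ultimately show ?case unfolding blaschke_Cons norm_mult
    by (intro mult_le_one) auto
qed

lemma blaschke_norm_lt:
  assumes "norm g = 1" "set as \<subseteq> ball 0 1" "norm z < 1" "as \<noteq> []"
  shows "norm (blaschke g as z) < 1"
proof -
  obtain a bs where as: "as = a # bs" using assms(4) by (cases as) auto
  have "norm a < 1" using assms(2) as by simp
  then have "norm (mob a z) < 1" using mob_norm_lt assms(3) by blast
  moreover have "norm (blaschke g bs z) \<le> 1" using blaschke_norm_le[OF assms(1) _ assms(3), of bs] assms(2) as by simp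
  ultimately show ?thesis
  proof -
    have "norm (mob a z) * norm (blaschke g bs z) \<le> norm (mob a z)"
      by (rule mult_left_le) (use \<open>norm (blaschke g bs z) \<le> 1\<close> in auto)
    then show ?thesis using \<open>norm (mob a z) < 1\<close> unfolding as blaschke_Cons norm_mult by linarith
  qed
qed

lemma mob_holo: "norm a < 1 \<Longrightarrow> mob a holomorphic_on ball 0 1"
  unfolding mob_def
proof (intro holomorphic_intros)
  fix z :: complex assume "norm a < 1" "z \<in> ball 0 1"
  then show "1 - cnj a * z \<noteq> 0" using denom_nz[of a z] by simp
qed

lemma blaschke_holo: "set as \<subseteq> ball 0 1 \<Longrightarrow> blaschke g as holomorphic_on ball 0 1"
proof (induction as)
  case Nil
  have "blaschke g [] = (\<lambda>z. g)" by (simp add: fun_eq_iff)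
  then show ?case by simp
next
  case (Cons a as)
  then show ?case unfolding blaschke_Cons_fun
    using Cons.prems by (intro holomorphic_on_mult[OF mob_holo Cons.IH]) auto
qed

lemma mob_deriv: assumes "1 - cnj a * z \<noteq> 0"
  shows "(mob a has_field_derivative (1 - cnj a * a) / (1 - cnj a * z)^2) (at z)"
proof -
  have d1: "((\<lambda>z. z - a) has_field_derivative 1) (at z)"
    by (auto intro!: derivative_eq_intros)
  have d2: "((\<lambda>z. 1 - cnj a * z) has_field_derivative - cnj a) (at z)"
    by (auto intro!: derivative_eq_intros)
  from DERIV_divide[OF d1 d2 assms]
  have "(mob a has_field_derivative (1 * (1 - cnj a * z) - (z - a) * (- cnj a)) / ((1 - cnj a * z) * (1 - cnj a * z))) (at z)"
    unfolding mob_def .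
  then show ?thesis by (rule DERIV_cong) (simp add: algebra_simps power2_eq_square)
qed

lemma prod_list_div: "(\<Prod>x\<leftarrow>xs. f x / h x) = (\<Prod>x\<leftarrow>xs. f x) / (\<Prod>x\<leftarrow>xs. h x)"
  for f h :: "_ \<Rightarrow> complex"
  by (induction xs) auto

lemma blaschke_quot: "blaschke g as z = g * (\<Prod>a\<leftarrow>as. z - a) / (\<Prod>a\<leftarrow>as. 1 - cnj a * z)"
  unfolding blaschke_def prod_list_div by simp

lemma poly_lin_prod: "poly (\<Prod>x\<leftarrow>xs. [:u x, v x:]) z = (\<Prod>x\<leftarrow>xs. u x + v x * z)"
  by (induction xs) (auto simp: algebra_simps)

lemma coeff_lin_prod:
  "degree (\<Prod>x\<leftarrow>xs. [:u x, v x:]) \<le> length xs \<and>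
   coeff (\<Prod>x\<leftarrow>xs. [:u x, v x:]) (length xs) = (\<Prod>x\<leftarrow>xs. v x)"
proof (induction xs)
  case Nil then show ?case by simp
next
  case (Cons x xs)
  let ?P = "\<Prod>x\<leftarrow>xs. [:u x, v x:]"
  have e: "[:u x, v x:] * ?P = smult (u x) ?P + pCons 0 (smult (v x) ?P)" by simp
  have "degree (smult (u x) ?P + pCons 0 (smult (v x) ?P)) \<le> Suc (length xs)"
  proof (rule degree_add_le)
    show "degree (smult (u x) ?P) \<le> Suc (length xs)"
      using Cons.IH degree_smult_le[of "u x" ?P] by linarith
    show "degree (pCons 0 (smult (v x) ?P)) \<le> Suc (length xs)"
      using Cons.IH degree_smult_le[of "v x" ?P] degree_pCons_le[of 0 "smult (v x) ?P"] by linarith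
  qed
  moreover have "coeff (smult (u x) ?P + pCons 0 (smult (v x) ?P)) (Suc (length xs)) = v x * (\<Prod>x\<leftarrow>xs. v x)"
    using Cons.IH by (simp add: coeff_eq_0)
  ultimately show ?case by (simp only: list.map prod_list.Cons e list.size) simp
qed

lemma cnj_prod_list: "cnj (\<Prod>x\<leftarrow>xs. f x) = (\<Prod>x\<leftarrow>xs. cnj (f x))"
  by (induction xs) auto

lemma cnj_sum_list: "cnj (\<Sum>x\<leftarrow>xs. f x) = (\<Sum>x\<leftarrow>xs. cnj (f x))"
  by (induction xs) auto

lemma norm_prod_list_le:
  assumes "\<And>x. x \<in> set xs \<Longrightarrow> norm (f x :: complex) \<le> norm (h x :: complex)"
  shows "norm (\<Prod>x\<leftarrow>xs. f x) \<le> norm (\<Prod>x\<leftarrow>xs. h x)"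
  using assms
proof (induction xs)
  case Nil then show ?case by simp
next
  case (Cons x xs)
  then show ?case unfolding list.map prod_list.Cons norm_mult
    by (intro mult_mono) auto
qed

lemma refl1: "z \<noteq> 0 \<Longrightarrow> z ^ length xs * cnj (\<Prod>x\<leftarrow>xs. inverse (cnj z) - x) = (\<Prod>x\<leftarrow>xs. 1 - cnj x * z)"
proof (induction xs)
  case (Cons x xs)
  have "z * cnj (inverse (cnj z) - x) = 1 - cnj x * z" using Cons.prems by (simp add: field_simps)
  then show ?case using Cons by (simp add: mult_ac)
qed simp

lemma refl2: "z \<noteq> 0 \<Longrightarrow> z ^ length xs * cnj (\<Prod>x\<leftarrow>xs. 1 - cnj x * inverse (cnj z)) = (\<Prod>x\<leftarrow>xs. z - x)"
proof (induction xs)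
  case (Cons x xs)
  have "z * cnj (1 - cnj x * inverse (cnj z)) = z - x" using Cons.prems by (simp add: field_simps)
  then show ?case using Cons by (simp add: mult_ac)
qed simp

lemma norm_le_rev: assumes "norm a < 1" "norm r \<ge> 1"
  shows "norm (1 - cnj a * r) \<le> norm (r - a)"
proof -
  have "(1 - (norm a)^2) * (1 - (norm r)^2) \<le> 0"
    using sq_lt1[OF assms(1)] assms(2) one_le_power[of "norm r" 2] by (intro mult_nonneg_nonpos) auto
  then have "(norm (1 - cnj a * r))^2 \<le> (norm (r - a))^2"
    using norm_identity[of a r] by linarith
  then show ?thesis by (rule power2_le_imp_le) simp
qed

lemma unimod_cnj: "norm g = 1 \<Longrightarrow> g * cnj g = 1"
  using complex_norm_square[of g] by simp

lemma prod_list_one [simp]: "(\<Prod>x\<leftarrow>xs. (1::'a::comm_monoid_mult)) = 1"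
  by (induction xs) auto

lemma div_div_cancel: "(d::complex) \<noteq> 0 \<Longrightarrow> (a / d) / (b / d) = a / b"
  by (cases "b = 0") (simp_all add: field_simps)

lemma is_blaschke_cong: "is_blaschke f d \<Longrightarrow> (\<And>z. z \<in> ball 0 1 \<Longrightarrow> f z = h z) \<Longrightarrow> is_blaschke h d"
  unfolding is_blaschke_def by metis

lemma mob_blaschke:
  assumes "is_blaschke f d" "norm c < 1"
  shows "is_blaschke (\<lambda>z. (f z - c) / (1 - cnj c * f z)) d"
proof -
  obtain g as where g: "norm g = 1" "length as = d" "set as \<subseteq> ball 0 1"
      "\<forall>z\<in>ball 0 1. f z = blaschke g as z"
    using assms(1) unfolding is_blaschke_def by blast
  define N where "N = (\<Prod>a\<leftarrow>as. [:-a, 1:])"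
  define D where "D = (\<Prod>a\<leftarrow>as. [:1, - cnj a:])"
  define P where "P = smult g N - smult c D"
  have polyN: "poly N z = (\<Prod>a\<leftarrow>as. z - a)" for z
    unfolding N_def poly_lin_prod by simp
  have polyD: "poly D z = (\<Prod>a\<leftarrow>as. 1 - cnj a * z)" for z
    unfolding D_def poly_lin_prod by simp
  have cN: "degree N \<le> d" "coeff N d = 1"
    using coeff_lin_prod[of "\<lambda>a. -a" "\<lambda>a. 1" as] g(2) unfolding N_def by auto
  have cD: "degree D \<le> d" "coeff D d = (\<Prod>a\<leftarrow>as. - cnj a)"
    using coeff_lin_prod[of "\<lambda>a. 1" "\<lambda>a. - cnj a" as] g(2) unfolding D_def by auto
  define lam where "lam = g - c * (\<Prod>a\<leftarrow>as. - cnj a)"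
  have np: "norm (\<Prod>a\<leftarrow>as. - cnj a) \<le> norm (\<Prod>a\<leftarrow>as. 1::complex)"
    by (rule norm_prod_list_le) (use g(3) in auto)
  then have np1: "norm (\<Prod>a\<leftarrow>as. - cnj a) \<le> 1" by (simp add: prod_list_replicate)
  have "norm (c * (\<Prod>a\<leftarrow>as. - cnj a)) < 1"
  proof -
    have "norm c * norm (\<Prod>a\<leftarrow>as. - cnj a) \<le> norm c"
      by (rule mult_left_le) (use np1 in auto)
    then show ?thesis using assms(2) by (simp add: norm_mult)
  qed
  then have lam0: "lam \<noteq> 0" unfolding lam_def using g(1) by auto
  have cP: "coeff P d = lam" unfolding P_def lam_def using cN cD by simp
  have dP: "degree P \<le> d" unfolding P_def
    using cN cD degree_smult_le[of g N] degree_smult_le[of c D]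
    by (intro degree_diff_le) linarith+
  have degP: "degree P = d" using le_degree[of P d] cP lam0 dP by simp
  have P0: "P \<noteq> 0" using cP lam0 by auto
  have lcP: "lead_coeff P = lam" using degP cP by simp
  obtain rs where rs: "mset rs = proots P" using ex_mset by blast
  have "P = smult (lead_coeff P) (\<Prod>x\<in>#proots P. [:-x, 1:])"
    by (rule complex_poly_decompose_multiset [symmetric])
  also have "(\<Prod>x\<in>#proots P. [:-x, 1:]) = (\<Prod>x\<leftarrow>rs. [:-x, 1:])"
    by (subst prod_mset_prod_list [symmetric]) (simp add: rs)
  finally have Pfac: "P = smult lam (\<Prod>x\<leftarrow>rs. [:-x, 1:])" using lcP by simp
  have lrs: "length rs = d"
    using size_proots_complex[of P] degP rs by (metis size_mset)
  have rsP: "poly P r = 0" if "r \<in> set rs" for r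
  proof -
    have "r \<in># proots P" using that rs by (metis set_mset_mset)
    then show ?thesis using P0 by simp
  qed
  have rsD: "set rs \<subseteq> ball 0 1"
  proof
    fix r assume r: "r \<in> set rs"
    show "r \<in> ball 0 1"
    proof (rule ccontr)
      assume "r \<notin> ball 0 1"
      then have r1: "norm r \<ge> 1" by simp
      have eq: "g * poly N r = c * poly D r" using rsP[OF r] unfolding P_def by simp
      have le: "norm (poly D r) \<le> norm (poly N r)"
        unfolding polyN polyD
        by (rule norm_prod_list_le) (use g(3) r1 norm_le_rev in auto)
      have "poly N r \<noteq> 0" unfolding polyN prod_list_zero_iff
        using g(3) r1 by auto
      then have pos: "norm (poly N r) > 0" by simp
      have "norm (poly N r) = norm c * norm (poly D r)"
        using arg_cong[OF eq, of norm] g(1) by (simp add: norm_mult)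
      also have "\<dots> \<le> norm c * norm (poly N r)" by (rule mult_left_mono[OF le]) simp
      also have "\<dots> < norm (poly N r)" using assms(2) pos by simp
      finally show False by simp
    qed
  qed
  define g' where "g' = lam / (g * cnj lam)"
  have g'1: "norm g' = 1" unfolding g'_def using g(1) lam0 by (simp add: norm_divide norm_mult)
  have gg: "g * cnj g = 1" using unimod_cnj[OF g(1)] .
  have polyP: "poly P z = lam * (\<Prod>r\<leftarrow>rs. z - r)" for z
  proof -
    have "poly P z = lam * poly (\<Prod>x\<leftarrow>rs. [:-x, 1:]) z" by (subst Pfac) simp
    also have "poly (\<Prod>x\<leftarrow>rs. [:-x, 1:]) z = (\<Prod>r\<leftarrow>rs. z - r)"
      unfolding poly_lin_prod by simp
    finally show ?thesis .
  qed
  have Q: "poly D z - cnj c * g * poly N z = g * cnj lam * (\<Prod>r\<leftarrow>rs. 1 - cnj r * z)" for z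
  proof (cases "z = 0")
    case True
    have "cnj lam = cnj g - cnj c * (\<Prod>a\<leftarrow>as. - a)"
      unfolding lam_def by (simp add: cnj_prod_list)
    moreover have h0: "(\<Prod>a\<leftarrow>as. (0::complex) - a) = (\<Prod>a\<leftarrow>as. - a)" by (induction as) auto
    ultimately have A: "poly D z - cnj c * g * poly N z = 1 - cnj c * g * (\<Prod>a\<leftarrow>as. - a)"
      and B: "g * cnj lam * (\<Prod>r\<leftarrow>rs. 1 - cnj r * z) = g * (cnj g - cnj c * (\<Prod>a\<leftarrow>as. - a))"
      unfolding polyN polyD True h0 by simp_all
    show ?thesis unfolding A B using gg by (simp add: right_diff_distrib mult_ac)
  next
    case False
    define w where "w = inverse (cnj z)"
    have "z ^ d * cnj (poly P w) = cnj g * (z ^ length as * cnj (poly N w)) - cnj c * (z ^ length as * cnj (poly D w))"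
      unfolding P_def g(2) by (simp add: algebra_simps)
    also have "z ^ length as * cnj (poly N w) = poly D z"
      unfolding polyN polyD w_def using refl1[OF False] by simp
    also have "z ^ length as * cnj (poly D w) = poly N z"
      unfolding polyN polyD w_def using refl2[OF False] by simp
    finally have e1: "z ^ d * cnj (poly P w) = cnj g * poly D z - cnj c * poly N z" .
    have "z ^ d * cnj (poly P w) = cnj lam * (z ^ length rs * cnj (\<Prod>r\<leftarrow>rs. w - r))"
      unfolding polyP lrs by simp
    also have "\<dots> = cnj lam * (\<Prod>r\<leftarrow>rs. 1 - cnj r * z)"
      unfolding w_def using refl1[OF False] by simp
    finally have "cnj g * poly D z - cnj c * poly N z = cnj lam * (\<Prod>r\<leftarrow>rs. 1 - cnj r * z)"
      using e1 by simp
    then have "g * (cnj g * poly D z - cnj c * poly N z) = g * cnj lam * (\<Prod>r\<leftarrow>rs. 1 - cnj r * z)"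
      by simp
    then have "g * cnj g * poly D z - g * cnj c * poly N z = g * cnj lam * (\<Prod>r\<leftarrow>rs. 1 - cnj r * z)"
      by (simp add: right_diff_distrib mult_ac)
    then show ?thesis unfolding gg by (simp add: mult_ac)
  qed
  show ?thesis unfolding is_blaschke_def
  proof (intro exI conjI ballI)
    show "norm g' = 1" "length rs = d" "set rs \<subseteq> ball 0 1" by fact+
    fix z :: complex assume z: "z \<in> ball 0 1"
    have Dz: "poly D z \<noteq> 0" unfolding polyD prod_list_zero_iff
      using g(3) z denom_nz by fastforce
    have fz: "f z = g * poly N z / poly D z"
      using g(4) z unfolding blaschke_quot polyN polyD by simp
    have "(f z - c) / (1 - cnj c * f z) = (g * poly N z - c * poly D z) / (poly D z - cnj c * g * poly N z)"
    proof -
      have n: "g * poly N z / poly D z - c = (g * poly N z - c * poly D z) / poly D z"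
        using Dz by (simp add: field_simps)
      have d: "1 - cnj c * (g * poly N z / poly D z) = (poly D z - cnj c * g * poly N z) / poly D z"
        using Dz by (simp add: field_simps)
      show ?thesis unfolding fz n d by (rule div_div_cancel[OF Dz])
    qed
    also have "\<dots> = poly P z / (poly D z - cnj c * g * poly N z)"
      unfolding P_def by simp
    also have "\<dots> = lam * (\<Prod>r\<leftarrow>rs. z - r) / (g * cnj lam * (\<Prod>r\<leftarrow>rs. 1 - cnj r * z))"
      unfolding polyP Q ..
    also have "\<dots> = blaschke g' rs z"
      unfolding blaschke_quot g'_def by simp
    finally show "(f z - c) / (1 - cnj c * f z) = blaschke g' rs z" .
  qed
qed


lemma canc: "(x::complex) \<noteq> 0 \<Longrightarrow> d \<noteq> 0 \<Longrightarrow> (x / d) * (q / (x * d)) = q / d^2"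
  by (simp add: field_simps power2_eq_square)

lemma canc2: "(z::complex) \<noteq> 0 \<Longrightarrow> z * (q / (x * (z * y))) = q / (x * y)"
  by (cases "x * y = 0") (auto simp: field_simps)

definition ld :: "complex list \<Rightarrow> complex \<Rightarrow> complex" where
  "ld as z = (\<Sum>a\<leftarrow>as. (1 - cnj a * a) / ((z - a) * (1 - cnj a * z)))"

lemma blaschke_deriv:
  assumes "set as \<subseteq> ball 0 1" "norm z < 1" "z \<notin> set as"
  shows "(blaschke g as has_field_derivative blaschke g as z * ld as z) (at z)"
  using assms(1,3)
proof (induction as)
  case Nil
  have "blaschke g [] = (\<lambda>z. g)" by (simp add: fun_eq_iff)
  then show ?case by (simp add: ld_def)
next
  case (Cons a as)
  have a: "norm a < 1" "z \<noteq> a" using Cons.prems by auto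
  have dn: "1 - cnj a * z \<noteq> 0" using denom_nz[of a z] a assms(2) by simp
  have za: "z - a \<noteq> 0" using a by simp
  have IH: "(blaschke g as has_field_derivative blaschke g as z * ld as z) (at z)"
    using Cons by simp
  have "((\<lambda>z. mob a z * blaschke g as z) has_field_derivative
      (1 - cnj a * a) / (1 - cnj a * z)^2 * blaschke g as z + blaschke g as z * ld as z * mob a z) (at z)"
    by (rule DERIV_mult[OF mob_deriv[OF dn] IH])
  moreover
  have Mt: "mob a z * ((1 - cnj a * a) / ((z - a) * (1 - cnj a * z))) = (1 - cnj a * a) / (1 - cnj a * z)^2"
    unfolding mob_def using canc[OF za dn] .
  have ldC: "ld (a # as) z = (1 - cnj a * a) / ((z - a) * (1 - cnj a * z)) + ld as z"
    by (simp add: ld_def)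
  have eq: "mob a z * blaschke g as z * ld (a # as) z =
     blaschke g as z * (mob a z * ((1 - cnj a * a) / ((z - a) * (1 - cnj a * z)))) + blaschke g as z * ld as z * mob a z"
    unfolding ldC by (simp add: algebra_simps)
  have "(1 - cnj a * a) / (1 - cnj a * z)^2 * blaschke g as z + blaschke g as z * ld as z * mob a z
      = mob a z * blaschke g as z * ld (a # as) z"
    unfolding eq Mt by (simp add: mult_ac)
  ultimately show ?case unfolding blaschke_Cons_fun
    by (rule DERIV_cong)
qed

lemma sum_list_if_eq:
  "(\<Sum>a\<leftarrow>xs. if a = z then c else 0) = of_nat (length (filter (\<lambda>a. a = z) xs)) * (c::complex)"
  by (induction xs) (auto simp: algebra_simps)

lemma sum_list_pos: "xs \<noteq> [] \<Longrightarrow> (\<And>x. x \<in> set xs \<Longrightarrow> f x > (0::real)) \<Longrightarrow> (\<Sum>x\<leftarrow>xs. f x) > 0"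
proof (induction xs)
  case (Cons x xs)
  then show ?case by (cases "xs = []") (auto intro: add_pos_pos)
qed simp

lemma poly_sum_list_map: "poly (\<Sum>x\<leftarrow>xs. p x) z = (\<Sum>x\<leftarrow>xs. poly (p x) z)"
  by (induction xs) auto

lemma sum_list_mult_right: "(\<Sum>x\<leftarrow>xs. f x) * (c::complex) = (\<Sum>x\<leftarrow>xs. f x * c)"
  by (induction xs) (auto simp: algebra_simps)

lemma sum_list_mult_left: "(c::complex) * (\<Sum>x\<leftarrow>xs. f x) = (\<Sum>x\<leftarrow>xs. c * f x)"
  by (induction xs) (auto simp: algebra_simps)

lemma sum_list_cong': "(\<And>x. x \<in> set xs \<Longrightarrow> f x = h x) \<Longrightarrow> (\<Sum>x\<leftarrow>xs. f x) = (\<Sum>x\<leftarrow>xs. h x)"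
  by (induction xs) auto

lemma of_real_sum_list: "complex_of_real (\<Sum>x\<leftarrow>xs. f x) = (\<Sum>x\<leftarrow>xs. complex_of_real (f x))"
  by (induction xs) auto

lemma single:
  assumes Dm: "set as \<subseteq> ball 0 1" and ne: "as \<noteq> []" and g0: "g \<noteq> 0"
    and crit: "\<forall>z\<in>ball 0 1. deriv (blaschke g as) z = 0 \<longrightarrow> blaschke g as z = 0"
  shows "card (set as) = 1"
proof -
  define A where "A = set as"
  have finA: "finite A" unfolding A_def by simp
  have AD: "\<And>b. b \<in> A \<Longrightarrow> norm b < 1" using Dm unfolding A_def by auto
  define f where "f b z = (z - b) * (1 - cnj b * z)" for b z :: complex
  define co where "co a = 1 - cnj a * a" for a :: complex
  define R where "R z = (\<Sum>a\<leftarrow>as. co a * (\<Prod>b\<in>A - {a}. f b z))" for z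
  define Rp where "Rp = (\<Sum>a\<leftarrow>as. smult (co a) (\<Prod>b\<in>A - {a}. [:-b, 1:] * [:1, - cnj b:]))"
  have pf: "poly ([:-b, 1:] * [:1, - cnj b:]) z = f b z" for b z
    unfolding f_def by (simp add: algebra_simps)
  have polyR: "poly Rp z = R z" for z
    unfolding Rp_def R_def poly_sum_list_map poly_smult poly_prod pf ..
  have co_of_real: "co a = of_real (1 - (norm a)^2)" for a
    unfolding co_def using complex_norm_square[of a] by (simp add: mult.commute)
  have co_real: "cnj (co a) = co a" for a unfolding co_of_real by simp
  have coA: "co a \<noteq> 0" if "norm a < 1" for a
    unfolding co_of_real of_real_eq_0_iff using sq_lt1[OF that] by simp
  have ldco: "ld as z = (\<Sum>a\<leftarrow>as. co a / f a z)" for z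
    unfolding ld_def co_def f_def ..
  have ldnz: "ld as z \<noteq> 0" if z: "norm z < 1" "z \<notin> A" for z
  proof
    assume l0: "ld as z = 0"
    have "deriv (blaschke g as) z = blaschke g as z * ld as z"
      by (rule DERIV_imp_deriv[OF blaschke_deriv[OF Dm z(1)]]) (use z in \<open>simp add: A_def\<close>)
    then have "deriv (blaschke g as) z = 0" using l0 by simp
    then have "blaschke g as z = 0" using crit z by simp
    moreover have "blaschke g as z \<noteq> 0"
    proof -
      have z1: "norm z \<le> 1" using z by simp
      have "(\<Prod>a\<leftarrow>as. (z - a) / (1 - cnj a * z)) \<noteq> 0"
        unfolding prod_list_zero_iff using z AD denom_nz[OF _ z1] by (auto simp: A_def)
      then show ?thesis using g0 unfolding blaschke_def by simp
    qed
    ultimately show False by simp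
  qed
  have Rld: "R z = ld as z * (\<Prod>b\<in>A. f b z)"
    if z: "z \<notin> A" "\<And>b. b \<in> A \<Longrightarrow> 1 - cnj b * z \<noteq> 0" for z
  proof -
    have "ld as z * (\<Prod>b\<in>A. f b z) = (\<Sum>a\<leftarrow>as. co a / f a z * (\<Prod>b\<in>A. f b z))"
      unfolding ldco sum_list_mult_right ..
    also have "\<dots> = R z" unfolding R_def
    proof (rule sum_list_cong')
      fix a assume a: "a \<in> set as"
      have fa: "f a z \<noteq> 0" using z a unfolding f_def A_def by auto
      have "(\<Prod>b\<in>A. f b z) = f a z * (\<Prod>b\<in>A - {a}. f b z)"
        using prod.remove[OF finA, of a "\<lambda>b. f b z"] a unfolding A_def by simp
      then show "co a / f a z * (\<Prod>b\<in>A. f b z) = co a * (\<Prod>b\<in>A - {a}. f b z)"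
        using fa by simp
    qed
    finally show ?thesis ..
  qed
  have RA: "R z \<noteq> 0" if z: "z \<in> A" for z
  proof -
    define c0 where "c0 = co z * (\<Prod>b\<in>A - {z}. f b z)"
    have "R z = (\<Sum>a\<leftarrow>as. if a = z then c0 else 0)"
      unfolding R_def
    proof (rule sum_list_cong')
      fix a assume a: "a \<in> set as"
      show "co a * (\<Prod>b\<in>A - {a}. f b z) = (if a = z then c0 else 0)"
      proof (cases "a = z")
        case True then show ?thesis unfolding c0_def by simp
      next
        case False
        then have "z \<in> A - {a}" using z by simp
        moreover have "f z z = 0" unfolding f_def by simp
        ultimately have "(\<Prod>b\<in>A - {a}. f b z) = 0"
          using finA by (metis (no_types, lifting) finite_Diff prod_zero_iff)
        then show ?thesis using False by simp
      qed
    qed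
    also have "\<dots> = of_nat (length (filter (\<lambda>a. a = z) as)) * c0" by (rule sum_list_if_eq)
    finally have Rz: "R z = of_nat (length (filter (\<lambda>a. a = z) as)) * c0" .
    have "length (filter (\<lambda>a. a = z) as) \<noteq> 0" using z unfolding A_def by (simp add: filter_empty_conv)
    moreover have "c0 \<noteq> 0"
    proof -
      have "co z \<noteq> 0" using coA AD z by blast
      moreover have "(\<Prod>b\<in>A - {z}. f b z) \<noteq> 0"
      proof -
        have "f b z \<noteq> 0" if "b \<in> A - {z}" for b
          using that denom_nz[of b z] AD[of b] AD[OF z] unfolding f_def by auto
        then show ?thesis using finA by (simp add: prod_zero_iff)
      qed
      ultimately show ?thesis unfolding c0_def by simp
    qed
    ultimately show ?thesis unfolding Rz by simp
  qed
  have Rcirc: "R z \<noteq> 0" if z: "norm z = 1" for z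
  proof -
    have zA: "z \<notin> A" using AD[of z] z by auto
    have dn: "\<And>b. b \<in> A \<Longrightarrow> 1 - cnj b * z \<noteq> 0" using denom_nz AD z by simp
    have z0: "z \<noteq> 0" using z by auto
    have zc: "z * cnj z = 1" using unimod_cnj[OF z] .
    have trm: "z * (co a / f a z) = of_real ((1 - (norm a)^2) / (norm (z - a))^2)" if "a \<in> set as" for a
    proof -
      have za: "z - a \<noteq> 0" using zA that unfolding A_def by auto
      have e: "1 - cnj a * z = z * cnj (z - a)" using zc by (simp add: algebra_simps)
      have n2: "(z - a) * cnj (z - a) = of_real ((norm (z - a))^2)" by (rule complex_norm_square[symmetric])
      have "z * (co a / f a z) = co a / ((z - a) * cnj (z - a))"
        unfolding f_def e using canc2[OF z0] .
      also have "\<dots> = of_real ((1 - (norm a)^2) / (norm (z - a))^2)"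
        unfolding n2 co_of_real by simp
      finally show ?thesis .
    qed
    have "z * ld as z = (\<Sum>a\<leftarrow>as. of_real ((1 - (norm a)^2) / (norm (z - a))^2))"
      unfolding ldco sum_list_mult_left by (rule sum_list_cong') (rule trm)
    also have "\<dots> = of_real (\<Sum>a\<leftarrow>as. (1 - (norm a)^2) / (norm (z - a))^2)"
      by (rule of_real_sum_list[symmetric])
    finally have zl: "z * ld as z = of_real (\<Sum>a\<leftarrow>as. (1 - (norm a)^2) / (norm (z - a))^2)" .
    have "(\<Sum>a\<leftarrow>as. (1 - (norm a)^2) / (norm (z - a))^2) > 0"
    proof (rule sum_list_pos[OF ne])
      fix a assume a: "a \<in> set as"
      have "z - a \<noteq> 0" using zA a unfolding A_def by auto
      moreover have "1 - (norm a)^2 > 0" using sq_lt1 AD a unfolding A_def by simp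
      ultimately show "(1 - (norm a)^2) / (norm (z - a))^2 > 0" by simp
    qed
    then have "ld as z \<noteq> 0" using zl by auto
    moreover have "(\<Prod>b\<in>A. f b z) \<noteq> 0"
    proof -
      have "f b z \<noteq> 0" if "b \<in> A" for b using that zA dn unfolding f_def by auto
      then show ?thesis using finA by (simp add: prod_zero_iff)
    qed
    ultimately show ?thesis using Rld[OF zA dn] by simp
  qed
  define k where "k = 2 * (card A - 1)"
  have fr: "z^2 * cnj (f b (inverse (cnj z))) = f b z" if "z \<noteq> 0" for z b
    using that unfolding f_def by (simp add: field_simps power2_eq_square)
  have Rrefl: "R z = z ^ k * cnj (R (inverse (cnj z)))" if z0: "z \<noteq> 0" for z
  proof -
    define w where "w = inverse (cnj z)"
    have "z ^ k * cnj (R w) = (\<Sum>a\<leftarrow>as. z ^ k * cnj (co a * (\<Prod>b\<in>A - {a}. f b w)))"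
      unfolding R_def cnj_sum_list sum_list_mult_left ..
    also have "\<dots> = R z" unfolding R_def
    proof (rule sum_list_cong')
      fix a assume a: "a \<in> set as"
      have cA: "card (A - {a}) = card A - 1" using a finA unfolding A_def by simp
      have "z ^ k = (\<Prod>b\<in>A - {a}. z^2)" by (simp only: k_def power_mult prod_constant cA)
      then have "z ^ k * cnj (co a * (\<Prod>b\<in>A - {a}. f b w)) = co a * (\<Prod>b\<in>A - {a}. z^2 * cnj (f b w))"
        by (simp add: co_real prod.distrib mult_ac)
      also have "\<dots> = co a * (\<Prod>b\<in>A - {a}. f b z)"
        unfolding w_def fr[OF z0] ..
      finally show "z ^ k * cnj (co a * (\<Prod>b\<in>A - {a}. f b w)) = co a * (\<Prod>b\<in>A - {a}. f b z)" .
    qed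
    finally show ?thesis unfolding w_def ..
  qed
  have Rnz: "R z \<noteq> 0" for z
  proof -
    have inD: "R z \<noteq> 0" if z: "norm z < 1" for z
    proof (cases "z \<in> A")
      case True then show ?thesis using RA by simp
    next
      case False
      have dn: "\<And>b. b \<in> A \<Longrightarrow> 1 - cnj b * z \<noteq> 0" using denom_nz AD z by simp
      have "(\<Prod>b\<in>A. f b z) \<noteq> 0"
      proof -
        have "f b z \<noteq> 0" if "b \<in> A" for b using that False dn unfolding f_def by auto
        then show ?thesis using finA by (simp add: prod_zero_iff)
      qed
      then show ?thesis using Rld[OF False dn] ldnz[OF z False] by simp
    qed
    consider "norm z < 1" | "norm z = 1" | "norm z > 1" by linarith
    then show ?thesis
    proof cases
      case 1 then show ?thesis using inD by simp
    next
      case 2 then show ?thesis using Rcirc by simp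
    next
      case 3
      then have z0: "z \<noteq> 0" by auto
      have "norm (inverse (cnj z)) < 1" using 3 by (simp add: norm_inverse inverse_less_1_iff)
      then have "R (inverse (cnj z)) \<noteq> 0" using inD by simp
      then show ?thesis using Rrefl[OF z0] z0 by simp
    qed
  qed
  have "constant (poly Rp)"
  proof (rule ccontr)
    assume "\<not> constant (poly Rp)"
    then obtain z where "poly Rp z = 0" using fundamental_theorem_of_algebra by blast
    then show False using Rnz polyR by simp
  qed
  then have Rc: "R x = R y" for x y using polyR unfolding constant_def by metis
  define c where "c = R 1"
  have c0: "c \<noteq> 0" unfolding c_def by (rule Rnz)
  have "R 1 = 1 ^ k * cnj (R (inverse (cnj 1)))" by (rule Rrefl) simp
  then have cc: "cnj c = c" unfolding c_def by simp
  have "R 2 = 2 ^ k * cnj (R (inverse (cnj 2)))" by (rule Rrefl) simp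
  then have "c = 2 ^ k * c" using Rc[of 2 1] Rc[of "inverse (cnj 2)" 1] cc unfolding c_def by simp
  then have "(2::complex) ^ k = 1" using c0 by simp
  then have "(of_nat (2 ^ k) :: complex) = of_nat 1" by simp
  then have "(2::nat) ^ k = 1" using of_nat_eq_iff by blast
  then have "k = 0" by simp
  then have "card A \<le> 1" unfolding k_def by simp
  moreover have "A \<noteq> {}" using ne unfolding A_def by simp
  then have "card A \<ge> 1" using finA by (simp add: Suc_le_eq card_gt_0_iff)
  ultimately have "card A = 1" by linarith
  then show ?thesis unfolding A_def .
qed


lemma blaschke_replicate: "blaschke g (replicate n a) z = g * mob a z ^ n"
  unfolding blaschke_def mob_def by (simp add: map_replicate_const prod_list_replicate)

lemma mob_0 [simp]: "mob 0 z = z"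
  unfolding mob_def by simp

lemma compose_list_Cons: "compose_list (f # fs) z = f (compose_list fs z)"
  unfolding compose_list_def by simp

lemma compose_list_single: "compose_list [f] z = f z"
  unfolding compose_list_def by simp

lemma mob_deriv_nz:
  assumes "norm a < 1" "norm z \<le> 1"
  shows "(1 - cnj a * a) / (1 - cnj a * z)^2 \<noteq> 0"
proof -
  have e: "1 - cnj a * a = of_real (1 - (norm a)^2)"
    using complex_norm_square[of a] by (simp add: mult.commute)
  have "1 - cnj a * a \<noteq> 0" unfolding e of_real_eq_0_iff using sq_lt1[OF assms(1)] by simp
  moreover have "1 - cnj a * z \<noteq> 0" using denom_nz assms by simp
  ultimately show ?thesis by simp
qed

theorem corollary4p9:
  fixes B :: "complex \<Rightarrow> complex" and m :: nat and p :: "nat \<Rightarrow> nat"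
    and \<sigma> :: "nat \<Rightarrow> nat"
  assumes "\<forall>i<m. p i \<ge> 2"
    and "is_blaschke B (\<Prod>i<m. p i)"
    and "card (critical_values B) = 1"
    and "\<sigma> permutes {..<m}"
  shows "\<exists>Bs :: nat \<Rightarrow> complex \<Rightarrow> complex.
           (\<forall>j<m. is_blaschke (Bs j) (p (\<sigma> j))) \<and>
           (\<forall>z\<in>ball 0 1. B z = compose_list (map Bs [0..<m]) z)"
proof -
  define d where "d = (\<Prod>i<m. p i)"
  have "0 < (\<Prod>i<m. p i)"
  proof (rule prod_pos)
    fix i assume "i \<in> {..<m}"
    then have "p i \<ge> 2" using assms(1) by simp
    then show "0 < p i" by simp
  qed
  then have dpos: "d \<ge> 1" unfolding d_def by linarith
  have isB: "is_blaschke B d" using assms(2) unfolding d_def .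
  obtain g as where B: "norm g = 1" "length as = d" "set as \<subseteq> ball 0 1"
      "\<forall>z\<in>ball 0 1. B z = blaschke g as z"
    using isB unfolding is_blaschke_def by blast
  have asne: "as \<noteq> []" using B(2) dpos by auto
  have Bnorm: "norm (B z) < 1" if "z \<in> ball 0 1" for z
    using B(4) blaschke_norm_lt[OF B(1) B(3) _ asne] that by simp
  obtain w0 where cv: "critical_values B = {w0}" using assms(3) card_1_singletonE by blast
  have w0cv: "w0 \<in> critical_values B" using cv by simp
  then have w0D: "norm w0 < 1" unfolding critical_values_def by simp
  obtain g' as' where G: "norm g' = 1" "length as' = d" "set as' \<subseteq> ball 0 1"
      "\<forall>z\<in>ball 0 1. (B z - w0) / (1 - cnj w0 * B z) = blaschke g' as' z"
    using mob_blaschke[OF isB w0D] unfolding is_blaschke_def by blast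
  define G where "G = blaschke g' as'"
  have as'ne: "as' \<noteq> []" using G(2) dpos by auto
  have Gnorm: "norm (G z) < 1" if "z \<in> ball 0 1" for z
    unfolding G_def using blaschke_norm_lt[OF G(1) G(3) _ as'ne] that by simp
  have Gholo: "G holomorphic_on ball 0 1" unfolding G_def by (rule blaschke_holo[OF G(3)])
  have w0': "norm (- w0) < 1" using w0D by simp
  have BG: "B z = mob (- w0) (G z)" if z: "z \<in> ball 0 1" for z
  proof -
    define b where "b = B z"
    have b1: "norm b \<le> 1" using Bnorm[OF z] unfolding b_def by simp
    have den: "1 - cnj w0 * b \<noteq> 0" using denom_nz[OF w0D b1] .
    have Gz: "G z = (b - w0) / (1 - cnj w0 * b)" using G(4) z unfolding G_def b_def by simp
    have k0: "1 - w0 * cnj w0 \<noteq> 0"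
    proof -
      have e: "1 - w0 * cnj w0 = of_real (1 - (norm w0)^2)" using complex_norm_square[of w0] by simp
      show ?thesis unfolding e of_real_eq_0_iff using sq_lt1[OF w0D] by simp
    qed
    have n: "(b - w0) / (1 - cnj w0 * b) + w0 = (b * (1 - w0 * cnj w0)) / (1 - cnj w0 * b)"
      using den by (simp add: field_simps)
    have dd: "1 + cnj w0 * ((b - w0) / (1 - cnj w0 * b)) = (1 - w0 * cnj w0) / (1 - cnj w0 * b)"
      using den by (simp add: field_simps)
    have "mob (- w0) (G z) = ((b - w0) / (1 - cnj w0 * b) + w0) / (1 + cnj w0 * ((b - w0) / (1 - cnj w0 * b)))"
      unfolding mob_def Gz by simp
    also have "\<dots> = (b * (1 - w0 * cnj w0)) / (1 - w0 * cnj w0)"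
      unfolding n dd by (rule div_div_cancel[OF den])
    also have "\<dots> = b" using k0 by simp
    finally show ?thesis unfolding b_def ..
  qed
  have critG: "\<forall>z\<in>ball 0 1. deriv (blaschke g' as') z = 0 \<longrightarrow> blaschke g' as' z = 0"
  proof (intro ballI impI)
    fix z :: complex assume z: "z \<in> ball 0 1" and d0: "deriv (blaschke g' as') z = 0"
    have dG: "(G has_field_derivative 0) (at z)"
      using holomorphic_derivI[OF Gholo open_ball z] d0 unfolding G_def by simp
    have Gz1: "norm (G z) \<le> 1" using Gnorm[OF z] by simp
    have dm: "(mob (- w0) has_field_derivative (1 - cnj (- w0) * (- w0)) / (1 - cnj (- w0) * G z)^2) (at (G z))"
      by (rule mob_deriv[OF denom_nz[OF w0' Gz1]])
    have "((mob (- w0) \<circ> G) has_field_derivative (1 - cnj (- w0) * (- w0)) / (1 - cnj (- w0) * G z)^2 * 0) (at z)"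
      by (rule DERIV_chain[OF dm dG])
    then have "((mob (- w0) \<circ> G) has_field_derivative 0) (at z)" by simp
    then have "(B has_field_derivative 0) (at z)"
      by (rule has_field_derivative_transform_within_open[OF _ open_ball z]) (simp add: BG)
    then have "deriv B z = 0" by (rule DERIV_imp_deriv)
    then have "B z \<in> critical_values B" unfolding critical_values_def using z Bnorm[OF z] by auto
    then have "B z = w0" using cv by simp
    moreover have "(B z - w0) / (1 - cnj w0 * B z) = blaschke g' as' z" using G(4) z by blast
    ultimately show "blaschke g' as' z = 0" by simp
  qed
  have "card (set as') = 1"
    by (rule single[OF G(3) as'ne _ critG]) (use G(1) in auto)
  then obtain a where a: "set as' = {a}" using card_1_singletonE by blast
  have aD: "norm a < 1" using a G(3) by auto
  have as'rep: "as' = replicate d a" using a G(2) by (intro replicate_eqI) auto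
  have Bform: "B z = mob (- w0) (g' * mob a z ^ d)" if "z \<in> ball 0 1" for z
    using BG[OF that] unfolding G_def as'rep blaschke_replicate .
  show ?thesis
  proof (cases "m = 0")
    case True
    then have d1: "d = 1" unfolding d_def by simp
    obtain z0 where z0: "z0 \<in> ball 0 1" "deriv B z0 = 0"
      using w0cv unfolding critical_values_def by blast
    have z01: "norm z0 \<le> 1" using z0 by simp
    define u where "u = g' * mob a z0"
    have u1: "norm u \<le> 1" unfolding u_def using mob_norm_lt[OF aD, of z0] z0 G(1)
      by (simp add: norm_mult)
    have dinner: "((\<lambda>z. g' * mob a z) has_field_derivative g' * ((1 - cnj a * a) / (1 - cnj a * z0)^2)) (at z0)"
      by (rule DERIV_cmult[OF mob_deriv[OF denom_nz[OF aD z01]]])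
    have dm: "(mob (- w0) has_field_derivative (1 - cnj (- w0) * (- w0)) / (1 - cnj (- w0) * u)^2) (at u)"
      by (rule mob_deriv[OF denom_nz[OF w0' u1]])
    have "((mob (- w0) \<circ> (\<lambda>z. g' * mob a z)) has_field_derivative
        (1 - cnj (- w0) * (- w0)) / (1 - cnj (- w0) * u)^2 * (g' * ((1 - cnj a * a) / (1 - cnj a * z0)^2))) (at z0)"
      by (rule DERIV_chain[OF dm[unfolded u_def] dinner, folded u_def])
    then have "(B has_field_derivative
        (1 - cnj (- w0) * (- w0)) / (1 - cnj (- w0) * u)^2 * (g' * ((1 - cnj a * a) / (1 - cnj a * z0)^2))) (at z0)"
      by (rule has_field_derivative_transform_within_open[OF _ open_ball z0(1)]) (simp add: Bform d1)
    then have "deriv B z0 = (1 - cnj (- w0) * (- w0)) / (1 - cnj (- w0) * u)^2 * (g' * ((1 - cnj a * a) / (1 - cnj a * z0)^2))"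
      by (rule DERIV_imp_deriv)
    moreover have "(1 - cnj (- w0) * (- w0)) / (1 - cnj (- w0) * u)^2 \<noteq> 0"
      by (rule mob_deriv_nz[OF w0' u1])
    moreover have "(1 - cnj a * a) / (1 - cnj a * z0)^2 \<noteq> 0"
      by (rule mob_deriv_nz[OF aD z01])
    moreover have "g' \<noteq> 0" using G(1) by auto
    ultimately have "deriv B z0 \<noteq> 0" by simp
    then show ?thesis using z0 by simp
  next
    case False
    then have m1: "m \<ge> 1" by simp
    define q where "q j = p (\<sigma> j)" for j
    define Phi where "Phi u = mob (- w0) (g' * u)" for u
    define Bs where "Bs j w = (if j = 0 then Phi else id) ((if j = m - 1 then mob a w else w) ^ q j)" for j w
    have isBs: "is_blaschke (Bs j) (q j)" if j: "j < m" for j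
    proof -
      define b where "b = (if j = m - 1 then a else 0)"
      have bD: "norm b < 1" unfolding b_def using aD by simp
      have inner: "(if j = m - 1 then mob a w else w) ^ q j = blaschke 1 (replicate (q j) b) w" for w
        unfolding blaschke_replicate b_def by simp
      have bl: "is_blaschke (blaschke c (replicate (q j) b)) (q j)" if "norm c = 1" for c
        unfolding is_blaschke_def using that bD by (intro exI[of _ c] exI[of _ "replicate (q j) b"]) auto
      show ?thesis
      proof (cases "j = 0")
        case True
        have "is_blaschke (\<lambda>z. (blaschke g' (replicate (q j) b) z - (- w0)) / (1 - cnj (- w0) * blaschke g' (replicate (q j) b) z)) (q j)"
          by (rule mob_blaschke[OF bl[OF G(1)] w0'])
        then show ?thesis
        proof (rule is_blaschke_cong)
          fix z :: complex
          show "(blaschke g' (replicate (q j) b) z - - w0) / (1 - cnj (- w0) * blaschke g' (replicate (q j) b) z) = Bs j z"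
            unfolding Bs_def Phi_def inner using True by (simp add: blaschke_replicate mob_def)
        qed
      next
        case False
        show ?thesis using bl[of 1, OF norm_one]
        proof (rule is_blaschke_cong)
          fix z :: complex
          show "blaschke 1 (replicate (q j) b) z = Bs j z"
            unfolding Bs_def inner[symmetric] using False by simp
        qed
      qed
    qed
    have comp: "compose_list (map Bs [i..<m]) z = (if i = 0 then Phi else id) (mob a z ^ (\<Prod>j\<in>{i..<m}. q j))"
      if "i \<le> m - 1" for i z
      using that
    proof (induction i rule: inc_induct)
      case base
      have "[m - 1..<m] = [m - 1]" using m1 by (simp add: upt_conv_Cons)
      moreover have "{m - 1..<m} = {m - 1}" using m1 by auto
      ultimately show ?case by (simp add: compose_list_single Bs_def)
    next
      case (step n)
      have ups: "[n..<m] = n # [Suc n..<m]" using step by (simp add: upt_conv_Cons)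
      have pr: "(\<Prod>j\<in>{n..<m}. q j) = q n * (\<Prod>j\<in>{Suc n..<m}. q j)"
        by (rule prod.atLeast_Suc_lessThan) (use step in simp)
      have nm: "n \<noteq> m - 1" using step by simp
      show ?case unfolding ups list.map compose_list_Cons step.IH pr
        using nm by (simp add: Bs_def power_mult[symmetric] mult.commute)
    qed
    have prodq: "(\<Prod>j\<in>{0..<m}. q j) = d"
    proof -
      have "(\<Prod>j\<in>{0..<m}. q j) = (\<Prod>j<m. (p \<circ> \<sigma>) j)" unfolding q_def by (simp add: atLeast0LessThan)
      also have "\<dots> = (\<Prod>i<m. p i)" using prod.permute[OF assms(4), of p] by simp
      finally show ?thesis unfolding d_def .
    qed
    show ?thesis
    proof (intro exI[of _ Bs] conjI allI impI ballI)
      fix j assume "j < m"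
      then show "is_blaschke (Bs j) (p (\<sigma> j))" using isBs q_def by simp
    next
      fix z :: complex assume z: "z \<in> ball 0 1"
      have "compose_list (map Bs [0..<m]) z = Phi (mob a z ^ d)"
        using comp[of 0 z] prodq by simp
      then show "B z = compose_list (map Bs [0..<m]) z" using Bform[OF z] unfolding Phi_def by simp
    qed
  qed
qed

end
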